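(* Let $c\ge 0$, $m\ge 2$, and let $x=((x^1,n_1),\dots,(x^q,n_q))$ be a non-convergent Nash equilibrium of the best-worst rule $s=(c,m)$. If $n_i=n_j=2$, $k$ is a candidate located at $x^i$ and $l$ is a candidate located at $x^j$, then $v_k(x)=v_l(x)$.
   Context: Setting: voters' ideal points are distributed uniformly (unit mass, Lebesgue measure) on $[0,1]$. There are $m$ candidates; a profile is $x=(x_1,\dots,x_m)\in[0,1]^m$. A voter with ideal point $y$ ranks candidates by distance $|x_i-y|$ (closer is better); ties are broken by a fair lottery (uniformly random strict order among tied candidates). Under the best-worst rule $s=(c,m)$ ($c\ge0$), a candidate receives $1$ point from each voter ranking her first, $-c$ from each voter ranking her last ($m$-th), and $0$ otherwise; $v_i(x)$ is candidate $i$'s expected total points. A (pure-strategy Nash) equilibrium is a profile $x^*$ with $v_i(x^* )\ge v_i(t,x^*_{-i})$ for all $i$ and $t\in[0,1]$ ($(t,x_{-i})$ is $x$ with $x_i$ replaced by $t$); it is non-convergent if at least two platforms are distinct. A profile determines its distinct occupied positions $x^1<\dots<x^q$, with $n_j$ the number of candidates at $x^j$; we write $x=((x^1,n_1),\dots,(x^q,n_q))$. *)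

theory Defs
  imports "HOL-Analysis.Analysis"
begin

text \<open>Candidates are indexed by 0..<m; a profile is x :: nat => real (only x i for i < m matter).\<close>

definition closest :: "nat \<Rightarrow> (nat \<Rightarrow> real) \<Rightarrow> real \<Rightarrow> nat set" where
  "closest m x y = {i. i < m \<and> (\<forall>j<m. \<bar>x i - y\<bar> \<le> \<bar>x j - y\<bar>)}"

definition farthest :: "nat \<Rightarrow> (nat \<Rightarrow> real) \<Rightarrow> real \<Rightarrow> nat set" where
  "farthest m x y = {i. i < m \<and> (\<forall>j<m. \<bar>x j - y\<bar> \<le> \<bar>x i - y\<bar>)}"

text \<open>Expected points candidate i gets from voter y under the best-worst rule (c,m),
  with ties broken by a uniformly random strict order among tied candidates:
  i is ranked first with probability 1/|closest| if i is closest, and ranked last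
  with probability 1/|farthest| if i is farthest.\<close>
definition bw_point :: "real \<Rightarrow> nat \<Rightarrow> (nat \<Rightarrow> real) \<Rightarrow> nat \<Rightarrow> real \<Rightarrow> real" where
  "bw_point c m x i y =
     (if i \<in> closest m x y then 1 / real (card (closest m x y)) else 0)
     - c * (if i \<in> farthest m x y then 1 / real (card (farthest m x y)) else 0)"

definition bw_score :: "real \<Rightarrow> nat \<Rightarrow> (nat \<Rightarrow> real) \<Rightarrow> nat \<Rightarrow> real" where
  "bw_score c m x i = (LINT y:{0..1}|lborel. bw_point c m x i y)"

definition is_profile :: "nat \<Rightarrow> (nat \<Rightarrow> real) \<Rightarrow> bool" where
  "is_profile m x \<longleftrightarrow> (\<forall>i<m. x i \<in> {0..1})"

definition nash_eq :: "real \<Rightarrow> nat \<Rightarrow> (nat \<Rightarrow> real) \<Rightarrow> bool" where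
  "nash_eq c m x \<longleftrightarrow> is_profile m x \<and>
     (\<forall>i<m. \<forall>t\<in>{0..1}. bw_score c m (x(i := t)) i \<le> bw_score c m x i)"

definition non_convergent :: "nat \<Rightarrow> (nat \<Rightarrow> real) \<Rightarrow> bool" where
  "non_convergent m x \<longleftrightarrow> (\<exists>i<m. \<exists>j<m. x i \<noteq> x j)"

definition n_at :: "nat \<Rightarrow> (nat \<Rightarrow> real) \<Rightarrow> real \<Rightarrow> nat" where
  "n_at m x p = card {i. i < m \<and> x i = p}"

end

theory Submission
  imports Defs
begin


definition fp :: "nat \<Rightarrow> (nat \<Rightarrow> real) \<Rightarrow> nat \<Rightarrow> real \<Rightarrow> real" where
  "fp m x i y = (if i \<in> closest m x y then 1 / real (card (closest m x y)) else 0)"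
definition lp :: "nat \<Rightarrow> (nat \<Rightarrow> real) \<Rightarrow> nat \<Rightarrow> real \<Rightarrow> real" where
  "lp m x i y = (if i \<in> farthest m x y then 1 / real (card (farthest m x y)) else 0)"

lemma bw_fp_lp: "bw_point c m x i y = fp m x i y - c * lp m x i y"
  unfolding bw_point_def fp_def lp_def by simp

lemma closest_fin: "finite (closest m x y)" unfolding closest_def by auto
lemma farthest_fin: "finite (farthest m x y)" unfolding farthest_def by auto

lemma fp_bounds: "0 \<le> fp m x i y" "fp m x i y \<le> 1"
proof -
  show "0 \<le> fp m x i y" unfolding fp_def by simp
  show "fp m x i y \<le> 1"
  proof (cases "i \<in> closest m x y")
    case True
    then have "card (closest m x y) \<ge> 1" using closest_fin
      by (metis One_nat_def Suc_leI card_gt_0_iff empty_iff)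
    then show ?thesis unfolding fp_def using True by simp
  qed (simp add: fp_def)
qed

lemma lp_bounds: "0 \<le> lp m x i y" "lp m x i y \<le> 1"
proof -
  show "0 \<le> lp m x i y" unfolding lp_def by simp
  show "lp m x i y \<le> 1"
  proof (cases "i \<in> farthest m x y")
    case True
    then have "card (farthest m x y) \<ge> 1" using farthest_fin
      by (metis One_nat_def Suc_leI card_gt_0_iff empty_iff)
    then show ?thesis unfolding lp_def using True by simp
  qed (simp add: lp_def)
qed

lemma fp_eq1:
  assumes "i < m" "\<forall>j<m. j \<noteq> i \<longrightarrow> \<bar>x i - y\<bar> < \<bar>x j - y\<bar>"
  shows "fp m x i y = 1"
proof -
  have "closest m x y = {i}"
  proof (rule set_eqI, rule iffI)
    fix j assume "j \<in> closest m x y"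
    then have "j < m" "\<forall>j'<m. \<bar>x j - y\<bar> \<le> \<bar>x j' - y\<bar>" unfolding closest_def by auto
    then show "j \<in> {i}" using assms by (cases "j = i") (auto simp: not_less[symmetric])
  next
    fix j assume "j \<in> {i}"
    then have ji: "j = i" by simp
    have "\<forall>j'<m. \<bar>x i - y\<bar> \<le> \<bar>x j' - y\<bar>"
    proof (intro allI impI)
      fix j' assume "j' < m" then show "\<bar>x i - y\<bar> \<le> \<bar>x j' - y\<bar>"
        using assms(2) by (cases "j' = i") auto
    qed
    then show "j \<in> closest m x y" using assms(1) ji unfolding closest_def by simp
  qed
  then show ?thesis unfolding fp_def by simp
qed

lemma lp_eq0:
  assumes "j < m" "\<bar>x j - y\<bar> > \<bar>x i - y\<bar>"
  shows "lp m x i y = 0"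
  using assms unfolding lp_def farthest_def by force

lemma fp_half:
  assumes "i < m" "card {j. j < m \<and> x j = x i} = 2"
    "\<forall>j<m. x j \<noteq> x i \<longrightarrow> \<bar>x j - y\<bar> \<noteq> \<bar>x i - y\<bar>"
  shows "fp m x i y = (if i \<in> closest m x y then 1/2 else 0)"
proof (cases "i \<in> closest m x y")
  case True
  have "closest m x y = {j. j < m \<and> x j = x i}"
  proof (rule set_eqI, rule iffI)
    fix j assume "j \<in> closest m x y"
    then have "j < m" "\<bar>x j - y\<bar> \<le> \<bar>x i - y\<bar>" using assms(1) unfolding closest_def by auto
    moreover have "\<bar>x i - y\<bar> \<le> \<bar>x j - y\<bar>" using True \<open>j < m\<close> unfolding closest_def by auto
    ultimately show "j \<in> {j. j < m \<and> x j = x i}" using assms(3) by force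
  next
    fix j assume "j \<in> {j. j < m \<and> x j = x i}"
    then show "j \<in> closest m x y" using True unfolding closest_def by auto
  qed
  then show ?thesis using True assms(2) unfolding fp_def by simp
qed (simp add: fp_def)

lemma lp_half:
  assumes "i < m" "card {j. j < m \<and> x j = x i} = 2"
    "\<forall>j<m. x j \<noteq> x i \<longrightarrow> \<bar>x j - y\<bar> \<noteq> \<bar>x i - y\<bar>"
  shows "lp m x i y = (if i \<in> farthest m x y then 1/2 else 0)"
proof (cases "i \<in> farthest m x y")
  case True
  have "farthest m x y = {j. j < m \<and> x j = x i}"
  proof (rule set_eqI, rule iffI)
    fix j assume "j \<in> farthest m x y"
    then have "j < m" "\<bar>x i - y\<bar> \<le> \<bar>x j - y\<bar>" using assms(1) unfolding farthest_def by auto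
    moreover have "\<bar>x j - y\<bar> \<le> \<bar>x i - y\<bar>" using True \<open>j < m\<close> unfolding farthest_def by auto
    ultimately show "j \<in> {j. j < m \<and> x j = x i}" using assms(3) by force
  next
    fix j assume "j \<in> {j. j < m \<and> x j = x i}"
    then show "j \<in> farthest m x y" using True unfolding farthest_def by auto
  qed
  then show ?thesis using True assms(2) unfolding lp_def by simp
qed (simp add: lp_def)

lemma P1: "Measurable.pred lborel (\<lambda>y::real. \<forall>j'\<in>{..<m::nat}. \<bar>x i - y\<bar> \<le> \<bar>(x j' - y)::real\<bar>)"
  apply (rule pred_intros_finite(3))
   apply simp
  by measurable
lemma P2: "Measurable.pred lborel (\<lambda>y::real. \<forall>j'\<in>{..<m::nat}. \<bar>x j' - y\<bar> \<le> \<bar>(x i - y)::real\<bar>)"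
  apply (rule pred_intros_finite(3))
   apply simp
  by measurable

lemma meas: "(\<lambda>y. bw_point c m x i y) \<in> borel_measurable lborel"
proof -
  have eq: "\<And>y. bw_point c m x i y =
    (if i < m \<and> (\<forall>j'\<in>{..<m}. \<bar>x i - y\<bar> \<le> \<bar>x j' - y\<bar>) then 1 / (\<Sum>j<m. if (\<forall>j'\<in>{..<m}. \<bar>x j - y\<bar> \<le> \<bar>x j' - y\<bar>) then 1 else 0) else 0)
   - c * (if i < m \<and> (\<forall>j'\<in>{..<m}. \<bar>x j' - y\<bar> \<le> \<bar>x i - y\<bar>) then 1 / (\<Sum>j<m. if (\<forall>j'\<in>{..<m}. \<bar>x j' - y\<bar> \<le> \<bar>x j - y\<bar>) then 1 else 0) else 0)"
  proof -
    fix y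
    have cc: "real (card (closest m x y)) = (\<Sum>j<m. if (\<forall>j'\<in>{..<m}. \<bar>x j - y\<bar> \<le> \<bar>x j' - y\<bar>) then 1 else 0)"
      unfolding closest_def by (simp add: sum.If_cases Int_def conj_commute lessThan_def)
    have cf: "real (card (farthest m x y)) = (\<Sum>j<m. if (\<forall>j'\<in>{..<m}. \<bar>x j' - y\<bar> \<le> \<bar>x j - y\<bar>) then 1 else 0)"
      unfolding farthest_def by (simp add: sum.If_cases Int_def conj_commute lessThan_def)
    show "?thesis y" unfolding bw_point_def cc[symmetric] cf[symmetric]
      unfolding closest_def farthest_def by simp
  qed
  show ?thesis unfolding eq using P1[of m x] P2[of m x] by measurable
qed

lemma sint:
  assumes "f \<in> borel_measurable lborel" "\<And>y. \<bar>f y\<bar> \<le> (B::real)"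
  shows "set_integrable lborel {0..1::real} f"
  unfolding set_integrable_def
  by (rule integrableI_bounded_set_indicator[where B=B]) (use assms in auto)

lemma bw_bound: "\<bar>bw_point c m x i y\<bar> \<le> 1 + \<bar>c\<bar>"
proof -
  have "\<bar>c * lp m x i y\<bar> \<le> \<bar>c\<bar>" using lp_bounds[of m x i y]
    by (simp add: abs_mult mult_left_le)
  then show ?thesis unfolding bw_fp_lp using fp_bounds[of m x i y] by linarith
qed

lemma bw_int: "set_integrable lborel {0..1::real} (bw_point c m x i)"
  by (rule sint[OF meas bw_bound])

lemma fp_dev:
  assumes "k < m" "l < m" "k \<noteq> l" "l \<in> closest m x y" "\<bar>t - y\<bar> < \<bar>x l - y\<bar>"
  shows "fp m (x(k:=t)) k y = 1"
proof (rule fp_eq1)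
  show "k < m" by fact
  show "\<forall>j<m. j \<noteq> k \<longrightarrow> \<bar>(x(k := t)) k - y\<bar> < \<bar>(x(k := t)) j - y\<bar>"
  proof (intro allI impI)
    fix j assume j: "j < m" "j \<noteq> k"
    have "\<bar>x l - y\<bar> \<le> \<bar>x j - y\<bar>" using assms(4) j unfolding closest_def by auto
    then show "\<bar>(x(k := t)) k - y\<bar> < \<bar>(x(k := t)) j - y\<bar>" using j assms(5) by simp
  qed
qed

lemma lp_dev:
  assumes "k < m" "l < m" "k \<noteq> l" "k' < m" "k' \<noteq> k" "x k' = x k" "\<epsilon> > 0"
    "\<bar>t - x l\<bar> = \<epsilon>" "\<bar>y - x l\<bar> \<ge> \<epsilon>"
    and gen: "\<forall>i<m. \<forall>j<m. x i \<noteq> x j \<longrightarrow> \<bar>\<bar>x i - y\<bar> - \<bar>x j - y\<bar>\<bar> \<ge> 2 * \<epsilon>"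
    and nf: "\<not> (l \<in> farthest m x y \<and> \<bar>t - y\<bar> > \<bar>x l - y\<bar>)"
  shows "lp m (x(k:=t)) k y = 0"
proof (cases "l \<in> farthest m x y")
  case True
  then have "\<bar>t - y\<bar> \<le> \<bar>x l - y\<bar>" using nf by auto
  moreover have "\<bar>t - y\<bar> \<noteq> \<bar>x l - y\<bar>" using assms(7,8,9) by arith
  ultimately have "\<bar>(x(k:=t)) l - y\<bar> > \<bar>(x(k:=t)) k - y\<bar>" using assms(3) by simp
  then show ?thesis by (rule lp_eq0[OF assms(2)])
next
  case False
  then obtain j where j: "j < m" "\<bar>x j - y\<bar> > \<bar>x l - y\<bar>"
    using assms(2) unfolding farthest_def by (auto simp: not_le)
  then have "x j \<noteq> x l" by auto
  then have "\<bar>\<bar>x j - y\<bar> - \<bar>x l - y\<bar>\<bar> \<ge> 2 * \<epsilon>" using gen j(1) assms(2) by blast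
  then have "\<bar>x j - y\<bar> \<ge> \<bar>x l - y\<bar> + 2 * \<epsilon>" using j(2) by arith
  moreover have "\<bar>t - y\<bar> \<le> \<bar>x l - y\<bar> + \<epsilon>" using assms(8) by arith
  ultimately have lt: "\<bar>x j - y\<bar> > \<bar>t - y\<bar>" using assms(7) by arith
  show ?thesis
  proof (cases "j = k")
    case True
    have "\<bar>(x(k:=t)) k' - y\<bar> > \<bar>(x(k:=t)) k - y\<bar>" using lt True assms(5,6) by simp
    then show ?thesis by (rule lp_eq0[OF assms(4)])
  next
    case False
    have "\<bar>(x(k:=t)) j - y\<bar> > \<bar>(x(k:=t)) k - y\<bar>" using lt False by simp
    then show ?thesis by (rule lp_eq0[OF j(1)])
  qed
qed

lemma pw:
  assumes c: "c \<ge> 0" and km: "k < m" and lm: "l < m" and "k' < m" "k' \<noteq> k" "x k' = x k"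
    and kl: "x k \<noteq> x l" and card2: "card {j. j < m \<and> x j = x l} = 2" and ep: "\<epsilon> > 0"
    and t1: "\<bar>t1 - x l\<bar> = \<epsilon>" and t2: "\<bar>t2 - x l\<bar> = \<epsilon>" and yl: "\<bar>y - x l\<bar> \<ge> \<epsilon>"
    and gen: "\<forall>i<m. \<forall>j<m. x i \<noteq> x j \<longrightarrow> \<bar>\<bar>x i - y\<bar> - \<bar>x j - y\<bar>\<bar> \<ge> 2 * \<epsilon>"
    and s1: "\<bar>t1 - y\<bar> < \<bar>x l - y\<bar> \<or> \<bar>t2 - y\<bar> < \<bar>x l - y\<bar>"
    and s2: "\<not> (\<bar>t1 - y\<bar> > \<bar>x l - y\<bar> \<and> \<bar>t2 - y\<bar> > \<bar>x l - y\<bar>)"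
  shows "2 * bw_point c m x l y \<le> bw_point c m (x(k:=t1)) k y + bw_point c m (x(k:=t2)) k y"
proof -
  have k_ne_l: "k \<noteq> l" using kl by auto
  have gl: "\<forall>j<m. x j \<noteq> x l \<longrightarrow> \<bar>x j - y\<bar> \<noteq> \<bar>x l - y\<bar>"
  proof (intro allI impI)
    fix j assume "j < m" "x j \<noteq> x l"
    then have "\<bar>\<bar>x j - y\<bar> - \<bar>x l - y\<bar>\<bar> \<ge> 2 * \<epsilon>" using gen lm by blast
    then show "\<bar>x j - y\<bar> \<noteq> \<bar>x l - y\<bar>" using ep by auto
  qed
  have g1: "fp m x l y = (if l \<in> closest m x y then 1/2 else 0)" by (rule fp_half[OF lm card2 gl])
  have g2: "lp m x l y = (if l \<in> farthest m x y then 1/2 else 0)" by (rule lp_half[OF lm card2 gl])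
  have F: "(if l \<in> closest m x y then 1 else 0) \<le> fp m (x(k:=t1)) k y + fp m (x(k:=t2)) k y"
  proof (cases "l \<in> closest m x y")
    case True
    then show ?thesis
    proof (cases "\<bar>t1 - y\<bar> < \<bar>x l - y\<bar>")
      case True
      then have "fp m (x(k:=t1)) k y = 1" using fp_dev[OF km lm k_ne_l \<open>l \<in> closest m x y\<close>] by blast
      then show ?thesis using fp_bounds[of m "x(k:=t2)" k y] by simp
    next
      case False
      then have "\<bar>t2 - y\<bar> < \<bar>x l - y\<bar>" using s1 by blast
      then have "fp m (x(k:=t2)) k y = 1" using fp_dev[OF km lm k_ne_l \<open>l \<in> closest m x y\<close>] by blast
      then show ?thesis using fp_bounds[of m "x(k:=t1)" k y] by simp
    qed
  next
    case False
    then show ?thesis using fp_bounds[of m "x(k:=t1)" k y] fp_bounds[of m "x(k:=t2)" k y] by simp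
  qed
  have L: "lp m (x(k:=t1)) k y + lp m (x(k:=t2)) k y \<le> (if l \<in> farthest m x y then 1 else 0)"
  proof (cases "\<bar>t1 - y\<bar> > \<bar>x l - y\<bar> \<and> l \<in> farthest m x y")
    case True
    then have "\<not> (l \<in> farthest m x y \<and> \<bar>t2 - y\<bar> > \<bar>x l - y\<bar>)" using s2 by blast
    then have "lp m (x(k:=t2)) k y = 0" using lp_dev[OF km lm k_ne_l assms(4,5,6) ep t2 yl gen] by blast
    then show ?thesis using True lp_bounds[of m "x(k:=t1)" k y] by simp
  next
    case False
    then have z1: "lp m (x(k:=t1)) k y = 0" using lp_dev[OF km lm k_ne_l assms(4,5,6) ep t1 yl gen] by blast
    show ?thesis
    proof (cases "l \<in> farthest m x y")
      case True
      then show ?thesis using z1 lp_bounds[of m "x(k:=t2)" k y] by simp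
    next
      case False
      then have "lp m (x(k:=t2)) k y = 0" using lp_dev[OF km lm k_ne_l assms(4,5,6) ep t2 yl gen] by blast
      then show ?thesis using z1 False by simp
    qed
  qed
  have "c * (lp m (x(k:=t1)) k y + lp m (x(k:=t2)) k y) \<le> c * (if l \<in> farthest m x y then 1 else 0)"
    using L c by (rule mult_left_mono)
  then show ?thesis unfolding bw_fp_lp g1 g2 using F
    by (auto simp: algebra_simps split: if_splits)
qed

lemma ind_int:
  assumes "e \<ge> 0"
  shows "(LINT y:{0..1::real}|lborel. indicator {a-e..a+e} y) \<le> 2 * e"
proof -
  have "(LINT y:{0..1::real}|lborel. indicator {a-e..a+e} y) = measure lborel ({0..1::real} \<inter> {a-e..a+e})"
    unfolding set_lebesgue_integral_def by (simp add: indicator_inter_arith[symmetric])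
  also have "\<dots> \<le> measure lborel {a-e..a+e}"
    by (rule measure_mono_fmeasurable) (auto simp: fmeasurable_def emeasure_lborel_Icc_eq)
  also have "\<dots> = 2 * e" using assms by (simp add: measure_def)
  finally show ?thesis .
qed

lemma ind_sint: "set_integrable lborel {0..1::real} (\<lambda>y. indicator {a..b::real} y :: real)"
  by (rule sint[where B=1]) (auto simp: indicator_def)

lemma set_int_sum:
  assumes "finite I" "\<And>i. i \<in> I \<Longrightarrow> set_integrable M A (f i)"
  shows "(LINT y:A|M. (\<Sum>i\<in>I. f i y)) = (\<Sum>i\<in>I. LINT y:A|M. (f i y::real))"
    "set_integrable M A (\<lambda>y. \<Sum>i\<in>I. f i y)"
proof -
  have *: "\<And>y. indicator A y *\<^sub>R (\<Sum>i\<in>I. f i y) = (\<Sum>i\<in>I. indicator A y *\<^sub>R f i y)"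
    by (rule scaleR_sum_right)
  show "(LINT y:A|M. (\<Sum>i\<in>I. f i y)) = (\<Sum>i\<in>I. LINT y:A|M. (f i y::real))"
    unfolding set_lebesgue_integral_def * using assms(2) unfolding set_integrable_def
    by (subst Bochner_Integration.integral_sum) auto
  show "set_integrable M A (\<lambda>y. \<Sum>i\<in>I. f i y)"
    unfolding set_integrable_def * using assms(2) unfolding set_integrable_def
    by (intro Bochner_Integration.integrable_sum) auto
qed

lemma gen_arith:
  fixes a b y e :: real
  assumes "\<bar>a - b\<bar> \<ge> 2 * e" "y \<notin> {(a+b)/2 - e .. (a+b)/2 + e}" "e > 0"
  shows "\<bar>\<bar>a - y\<bar> - \<bar>b - y\<bar>\<bar> \<ge> 2 * e"
proof -
  have h0: "e < y - (a+b)/2 \<or> e < (a+b)/2 - y" using assms(2) by auto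
  have h: "2*e < 2*y - a - b \<or> 2*e < a + b - 2*y" using h0 by (auto simp: field_simps)
  have h2: "2 * e \<le> a - b \<or> 2 * e \<le> b - a" using assms(1) by (smt (verit))
  have D: "2 * e \<le> \<bar>a - y\<bar> - \<bar>b - y\<bar> \<or> 2 * e \<le> \<bar>b - y\<bar> - \<bar>a - y\<bar>"
  proof (cases "y \<le> a")
    case True note ya = True
    then have A: "\<bar>a - y\<bar> = a - y" by simp
    show ?thesis
    proof (cases "y \<le> b")
      case True
      then have B: "\<bar>b - y\<bar> = b - y" by simp
      show ?thesis unfolding A B using h2 by (smt (verit))
    next
      case False
      then have B: "\<bar>b - y\<bar> = y - b" by simp
      show ?thesis unfolding A B using h ya False by (smt (verit))
    qed
  next
    case False note ya = False
    then have A: "\<bar>a - y\<bar> = y - a" by simp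
    show ?thesis
    proof (cases "y \<le> b")
      case True
      then have B: "\<bar>b - y\<bar> = b - y" by simp
      show ?thesis unfolding A B using h ya True by (smt (verit))
    next
      case False
      then have B: "\<bar>b - y\<bar> = y - b" by simp
      show ?thesis unfolding A B using h2 by (smt (verit))
    qed
  qed
  then show ?thesis by (metis abs_ge_self abs_ge_minus_self order_trans minus_diff_eq)
qed

lemma sides:
  fixes p e y :: real
  assumes "0 \<le> p" "p \<le> 1" "0 \<le> y" "y \<le> 1" "0 < e" "e \<le> 1/2" "\<bar>y - p\<bar> \<ge> e"
  shows "\<bar>(if p - e \<ge> 0 then p - e else p + e) - p\<bar> = e"
    "\<bar>(if p + e \<le> 1 then p + e else p - e) - p\<bar> = e"
    "(if p - e \<ge> 0 then p - e else p + e) \<in> {0..1}"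
    "(if p + e \<le> 1 then p + e else p - e) \<in> {0..1}"
    "\<bar>(if p - e \<ge> 0 then p - e else p + e) - y\<bar> < \<bar>p - y\<bar> \<or> \<bar>(if p + e \<le> 1 then p + e else p - e) - y\<bar> < \<bar>p - y\<bar>"
    "\<not> (\<bar>(if p - e \<ge> 0 then p - e else p + e) - y\<bar> > \<bar>p - y\<bar> \<and> \<bar>(if p + e \<le> 1 then p + e else p - e) - y\<bar> > \<bar>p - y\<bar>)"
  using assms by (auto simp: abs_real_def split: if_splits)

lemma bw_lo: "c \<ge> 0 \<Longrightarrow> - c \<le> bw_point c m x i y"
  unfolding bw_fp_lp using fp_bounds[of m x i y] lp_bounds[of m x i y]
  by (smt (verit) mult_left_le)

lemma bw_hi: "c \<ge> 0 \<Longrightarrow> bw_point c m x i y \<le> 1"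
  unfolding bw_fp_lp using fp_bounds[of m x i y] lp_bounds[of m x i y]
  by (smt (verit) mult_nonneg_nonneg)


lemma fin_arith:
  fixes X Y G KH F1 F2 vk vl B :: real
  assumes "X \<le> Y" "X = 2*G - KH" "Y = F1+F2" "F1 \<le> vk" "F2 \<le> vk" "vl = G" "KH \<le> 2*B"
  shows "vl \<le> vk + B"
  using assms by linarith

lemma ge:
  assumes c: "c \<ge> 0" and ne: "nash_eq c m x" and km: "k < m" and lm: "l < m"
    and nk: "n_at m x (x k) = 2" and nl: "n_at m x (x l) = 2" and kl: "x k \<noteq> x l"
  shows "bw_score c m x l \<le> bw_score c m x k"
proof -
  have prof: "\<forall>i<m. x i \<in> {0..1}" using ne unfolding nash_eq_def is_profile_def by blast
  have nash: "\<And>t. t \<in> {0..1} \<Longrightarrow> bw_score c m (x(k := t)) k \<le> bw_score c m x k"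
    using ne km unfolding nash_eq_def by blast
  obtain k' where k': "k' < m" "k' \<noteq> k" "x k' = x k"
  proof -
    have "card {j. j < m \<and> x j = x k} = 2" using nk unfolding n_at_def .
    then obtain a b where ab: "{j. j < m \<and> x j = x k} = {a, b}" "a \<noteq> b"
      unfolding card_2_iff by blast
    have "k \<in> {a, b}" using km ab(1) by blast
    then obtain k' where "k' \<in> {a, b}" "k' \<noteq> k" using ab(2) by blast
    then have "k' \<in> {j. j < m \<and> x j = x k}" "k' \<noteq> k" using ab(1) by simp_all
    then show ?thesis using that by blast
  qed
  have card2: "card {j. j < m \<and> x j = x l} = 2" using nl unfolding n_at_def .
  define S where "S = (\<lambda>(i,j). \<bar>x i - x j\<bar>) ` {(i,j). i < m \<and> j < m \<and> x i \<noteq> x j}"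
  have finS: "finite S" unfolding S_def
    by (rule finite_imageI, rule finite_subset[of _ "{..<m} \<times> {..<m}"]) auto
  have inS: "\<bar>x i - x j\<bar> \<in> S" if "i < m" "j < m" "x i \<noteq> x j" for i j
    unfolding S_def by (rule image_eqI[where x="(i,j)"]) (use that in auto)
  have klS: "\<bar>x k - x l\<bar> \<in> S" using inS km lm kl by blast
  define d where "d = Min S"
  have "d \<in> S" unfolding d_def using finS klS by (intro Min_in) auto
  then obtain i0 j0 where "i0 < m" "j0 < m" "x i0 \<noteq> x j0" "d = \<bar>x i0 - x j0\<bar>"
    unfolding S_def by auto
  then have dpos: "d > 0" by simp
  have dS: "\<And>i j. i < m \<Longrightarrow> j < m \<Longrightarrow> x i \<noteq> x j \<Longrightarrow> d \<le> \<bar>x i - x j\<bar>"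
    unfolding d_def using finS inS by (intro Min_le) auto
  have d1: "d \<le> 1"
  proof -
    have "d \<le> \<bar>x k - x l\<bar>" by (rule dS[OF km lm kl])
    moreover have "x k \<in> {0..1}" "x l \<in> {0..1}" using prof km lm by blast+
    then have "\<bar>x k - x l\<bar> \<le> 1" by (auto simp: abs_real_def)
    ultimately show ?thesis by linarith
  qed
  define K where "K = 2 + 2 * c"
  have K0: "K \<ge> 0" using c unfolding K_def by simp
  define N where "N = real (m * m) + 1"
  have key: "bw_score c m x l \<le> bw_score c m x k + K * N * e" if e: "0 < e" "e \<le> d / 2" for e
  proof -
    define p where "p = x l"
    have p01: "0 \<le> p" "p \<le> 1" using prof lm unfolding p_def by auto
    have e12: "e \<le> 1/2" using e d1 by linarith
    define t1 where "t1 = (if p - e \<ge> 0 then p - e else p + e)"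
    define t2 where "t2 = (if p + e \<le> 1 then p + e else p - e)"
    define f1 where "f1 = bw_point c m (x(k:=t1)) k"
    define f2 where "f2 = bw_point c m (x(k:=t2)) k"
    define g where "g = bw_point c m x l"
    define I where "I = (\<lambda>i j (y::real). indicator {(x i + x j)/2 - e .. (x i + x j)/2 + e} y :: real)"
    define h where "h = (\<lambda>y. (\<Sum>i<m. \<Sum>j<m. I i j y) + indicator {p - e .. p + e} y :: real)"
    have t1_01: "t1 \<in> {0..1}" and t2_01: "t2 \<in> {0..1}"
      unfolding t1_def t2_def using p01 e e12 by auto
    have Iint: "\<And>i j. set_integrable lborel {0..1::real} (I i j)" unfolding I_def by (rule ind_sint)
    have Isum: "set_integrable lborel {0..1::real} (\<lambda>y. \<Sum>i<m. \<Sum>j<m. I i j y)"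
      by (intro set_int_sum(2)) (auto intro!: set_int_sum(2) Iint)
    have hint: "set_integrable lborel {0..1::real} h"
      unfolding h_def by (intro set_integral_add(1) Isum ind_sint)
    have hval: "(LINT y:{0..1}|lborel. h y) \<le> N * (2 * e)"
    proof -
      have "(LINT y:{0..1}|lborel. h y) = (LINT y:{0..1}|lborel. (\<Sum>i<m. \<Sum>j<m. I i j y)) + (LINT y:{0..1}|lborel. indicator {p - e .. p + e} y)"
        unfolding h_def by (intro set_integral_add(2) Isum ind_sint)
      also have "(LINT y:{0..1}|lborel. (\<Sum>i<m. \<Sum>j<m. I i j y)) = (\<Sum>i<m. LINT y:{0..1}|lborel. (\<Sum>j<m. I i j y))"
        by (intro set_int_sum(1)) (auto intro!: set_int_sum(2) Iint)
      also have "\<dots> = (\<Sum>i<m. \<Sum>j<m. LINT y:{0..1}|lborel. I i j y)"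
        by (intro sum.cong refl set_int_sum(1)) (auto intro!: Iint)
      also have "\<dots> \<le> (\<Sum>i<m. \<Sum>j<m. 2 * e)"
        unfolding I_def using e by (intro sum_mono ind_int) auto
      also have "(LINT y:{0..1}|lborel. indicator {p - e .. p + e} y) \<le> 2 * e"
        using e by (intro ind_int) auto
      finally show ?thesis unfolding N_def by (simp add: algebra_simps)
    qed
    have hnn: "\<And>y. 0 \<le> h y" unfolding h_def I_def by (intro add_nonneg_nonneg sum_nonneg) auto
    have pw2: "2 * g y - K * h y \<le> f1 y + f2 y" if y: "y \<in> {0..1}" for y
    proof (cases "(\<exists>i<m. \<exists>j<m. y \<in> {(x i + x j)/2 - e .. (x i + x j)/2 + e}) \<or> y \<in> {p - e .. p + e}")
      case True
      have h1: "1 \<le> h y"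
      proof (cases "y \<in> {p - e .. p + e}")
        case True
        have "0 \<le> (\<Sum>i<m. \<Sum>j<m. I i j y)" unfolding I_def by (intro sum_nonneg) auto
        then show ?thesis unfolding h_def using True by simp
      next
        case False
        then obtain i j where ij: "i < m" "j < m" "y \<in> {(x i + x j)/2 - e .. (x i + x j)/2 + e}"
          using \<open>(\<exists>i<m. \<exists>j<m. _) \<or> _\<close> by blast
        have "1 = I i j y" unfolding I_def using ij(3) by simp
        also have "\<dots> \<le> (\<Sum>j<m. I i j y)"
          by (rule member_le_sum) (use ij in \<open>auto simp: I_def\<close>)
        also have "\<dots> \<le> (\<Sum>i<m. \<Sum>j<m. I i j y)"
          by (rule member_le_sum[where f="\<lambda>i. \<Sum>j<m. I i j y"]) (use ij in \<open>auto simp: I_def intro: sum_nonneg\<close>)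
        finally have "1 \<le> (\<Sum>i<m. \<Sum>j<m. I i j y)" .
        moreover have "0 \<le> (indicator {p - e .. p + e} y :: real)" by simp
        ultimately show ?thesis unfolding h_def by linarith
      qed
      have "K * 1 \<le> K * h y" using h1 K0 by (rule mult_left_mono)
      then have Kh: "K \<le> K * h y" by simp
      moreover have "g y \<le> 1" unfolding g_def using bw_hi[OF c] .
      moreover have "- c \<le> f1 y" "- c \<le> f2 y" unfolding f1_def f2_def using bw_lo[OF c] by auto
      ultimately show ?thesis using Kh K_def by linarith
    next
      case False
      have gen: "\<forall>i<m. \<forall>j<m. x i \<noteq> x j \<longrightarrow> \<bar>\<bar>x i - y\<bar> - \<bar>x j - y\<bar>\<bar> \<ge> 2 * e"
      proof (intro allI impI)
        fix i j assume ij: "i < m" "j < m" "x i \<noteq> x j"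
        have "2 * e \<le> \<bar>x i - x j\<bar>" using dS[OF ij] e by linarith
        moreover have "y \<notin> {(x i + x j)/2 - e .. (x i + x j)/2 + e}" using False ij by blast
        ultimately show "\<bar>\<bar>x i - y\<bar> - \<bar>x j - y\<bar>\<bar> \<ge> 2 * e" using e(1) by (rule gen_arith)
      qed
      have yp: "\<bar>y - p\<bar> \<ge> e" using False by auto
      have y01: "0 \<le> y" "y \<le> 1" using y by auto
      note sd = sides[OF p01 y01 e(1) e12 yp]
      have "2 * g y \<le> f1 y + f2 y"
        unfolding g_def f1_def f2_def
      proof (rule pw[OF c km lm k' kl card2 e(1)])
        show "\<bar>t1 - x l\<bar> = e" "\<bar>t2 - x l\<bar> = e" using sd(1,2) unfolding t1_def t2_def p_def by auto
        show "e \<le> \<bar>y - x l\<bar>" using yp unfolding p_def .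
        show "\<forall>i<m. \<forall>j<m. x i \<noteq> x j \<longrightarrow> 2 * e \<le> \<bar>\<bar>x i - y\<bar> - \<bar>x j - y\<bar>\<bar>" using gen .
        show "\<bar>t1 - y\<bar> < \<bar>x l - y\<bar> \<or> \<bar>t2 - y\<bar> < \<bar>x l - y\<bar>" using sd(5) unfolding t1_def t2_def p_def .
        show "\<not> (\<bar>x l - y\<bar> < \<bar>t1 - y\<bar> \<and> \<bar>x l - y\<bar> < \<bar>t2 - y\<bar>)" using sd(6) unfolding t1_def t2_def p_def .
      qed
      moreover have "0 \<le> K * h y" using K0 hnn by simp
      ultimately show ?thesis by linarith
    qed
    have gi: "set_integrable lborel {0..1::real} g" unfolding g_def by (rule bw_int)
    have f1i: "set_integrable lborel {0..1::real} f1" unfolding f1_def by (rule bw_int)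
    have f2i: "set_integrable lborel {0..1::real} f2" unfolding f2_def by (rule bw_int)
    have gi2: "set_integrable lborel {0..1::real} (\<lambda>y. 2 * g y)"
      by (rule set_integrable_mult_right) (rule gi)
    have hi2: "set_integrable lborel {0..1::real} (\<lambda>y. K * h y)"
      by (rule set_integrable_mult_right) (rule hint)
    have int1: "set_integrable lborel {0..1::real} (\<lambda>y. 2 * g y - K * h y)"
      by (rule set_integral_diff(1)[OF gi2 hi2])
    have int2: "set_integrable lborel {0..1::real} (\<lambda>y. f1 y + f2 y)"
      by (rule set_integral_add(1)[OF f1i f2i])
    have A1: "(LINT y:{0..1}|lborel. 2 * g y - K * h y) \<le> (LINT y:{0..1}|lborel. f1 y + f2 y)"
      by (rule set_integral_mono[OF int1 int2 pw2])
    have A2: "(LINT y:{0..1}|lborel. 2 * g y - K * h y) = 2 * (LINT y:{0..1}|lborel. g y) - K * (LINT y:{0..1}|lborel. h y)"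
      unfolding set_integral_diff(2)[OF gi2 hi2] set_integral_mult_right ..
    have A3: "(LINT y:{0..1}|lborel. f1 y + f2 y) = (LINT y:{0..1}|lborel. f1 y) + (LINT y:{0..1}|lborel. f2 y)"
      using f1i f2i by (rule set_integral_add(2))
    have A4: "(LINT y:{0..1}|lborel. f1 y) \<le> bw_score c m x k"
      using nash[OF t1_01] unfolding f1_def bw_score_def .
    have A5: "(LINT y:{0..1}|lborel. f2 y) \<le> bw_score c m x k"
      using nash[OF t2_01] unfolding f2_def bw_score_def .
    have A6: "bw_score c m x l = (LINT y:{0..1}|lborel. g y)" unfolding g_def bw_score_def ..
    have "K * (LINT y:{0..1}|lborel. h y) \<le> K * (N * (2 * e))" using hval K0 by (rule mult_left_mono)
    moreover have "K * (N * (2 * e)) = 2 * (K * N * e)" by (simp add: mult_ac)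
    ultimately have A7: "K * (LINT y:{0..1}|lborel. h y) \<le> 2 * (K * N * e)" by simp
    show ?thesis by (rule fin_arith[OF A1 A2 A3 A4 A5 A6 A7])
  qed
  show ?thesis
  proof (rule ccontr)
    assume "\<not> ?thesis"
    then have gap: "bw_score c m x l - bw_score c m x k > 0" by simp
    have "K > 0" using c unfolding K_def by auto
    have "N > 0" unfolding N_def by (simp add: add_nonneg_pos)
    note \<open>K > 0\<close> this
    then have KN: "K * N > 0" by simp
    define e where "e = min (d / 2) ((bw_score c m x l - bw_score c m x k) / (2 * (K * N)))"
    have e0: "0 < e" unfolding e_def using dpos gap KN by simp
    have "e \<le> d / 2" unfolding e_def by simp
    from key[OF e0 this] have "bw_score c m x l \<le> bw_score c m x k + K * N * e" .
    moreover have "K * N * e \<le> K * N * ((bw_score c m x l - bw_score c m x k) / (2 * (K * N)))"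
      using KN unfolding e_def by (intro mult_left_mono) (auto simp del: min_less_iff_conj)
    moreover have "K * N * ((bw_score c m x l - bw_score c m x k) / (2 * (K * N))) = (bw_score c m x l - bw_score c m x k) / 2"
    proof -
      have "\<And>D::real. K * N * (D / (2 * (K * N))) = D / 2" using KN \<open>K > 0\<close> \<open>N > 0\<close> by (simp add: field_simps)
      then show ?thesis by blast
    qed
    moreover have "\<And>(a::real) (b::real) (A::real) (B::real). a \<le> b + A \<Longrightarrow> A \<le> B \<Longrightarrow> B = (a - b) / 2 \<Longrightarrow> 0 < a - b \<Longrightarrow> False"
      by (simp add: field_simps)
    ultimately show False using gap by blast
  qed
qed


theorem lemma3:
  fixes c :: real and m :: nat and x :: "nat \<Rightarrow> real" and k l :: nat
  assumes "c \<ge> 0" and "m \<ge> 2"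
    and "nash_eq c m x" and "non_convergent m x"
    and "k < m" and "l < m"
    and "n_at m x (x k) = 2" and "n_at m x (x l) = 2"
  shows "bw_score c m x k = bw_score c m x l"
proof (cases "x k = x l")
  case True
  have "bw_point c m x k = bw_point c m x l"
    unfolding bw_point_def closest_def farthest_def using True assms(5,6) by (intro ext) simp
  then show ?thesis unfolding bw_score_def by simp
next
  case False
  have "bw_score c m x l \<le> bw_score c m x k"
    by (rule ge[OF assms(1,3,5,6,7,8) False])
  moreover have "bw_score c m x k \<le> bw_score c m x l"
    using False by (intro ge[OF assms(1,3,6,5,8,7)]) auto
  ultimately show ?thesis by linarith
qed

end
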